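(* Let $K\subseteq\mathbb{R}^d$ be a convex body and $\varepsilon>0$, and suppose the width of $K$ in every direction is at least $\varepsilon$. Then for every $i \in I^{\pm}$, $\mathrm{area}(K_i) \le C\cdot \mathrm{area}(K)$, where $C$ is a constant depending only on $d$.
   Context: $d$ is a fixed dimension. $\mathrm{area}(K)$ is the surface area of $K$. For a unit vector $u$, $H^+(u)$ denotes the closed supporting halfspace of $K$ with outer normal $u$ (so $K\subseteq H^+(u)$). Let $e_1,\dots,e_d$ be the coordinate unit vectors, $e_{-j}=-e_j$, and $I^{\pm}=\{\pm1,\dots,\pm d\}$. For $i\in I^\pm$ let $V_i=\{u\in\mathbb{S}^{d-1} : \langle u,e_i\rangle \ge \langle u,e_j\rangle \text{ for all } j\in I^\pm, j\ne i\}$ and $S_i=\bigcap_{u\in V_i}H^+(u)$. Fix $i$ and call $e_i$ the upward vertical direction; let $X_i$ be the hyperplane through the origin orthogonal to $e_i$, and for a point or set $S$ let $S^{\downarrow}$ be its orthogonal projection onto $X_i$. For $\alpha\ge0$ let $K^\downarrow\oplus\alpha$ be the set of points of $X_i$ within Euclidean distance $\alpha$ of $K^\downarrow$, and $K_i^{(\alpha)}=\{x\in S_i: x^\downarrow\in K^\downarrow\oplus\alpha\}$; set $K_i=K_i^{(2\varepsilon)}$. The lower boundary of $K_i$ consists of the boundary points of $K_i$ that have a non-vertical supporting hyperplane, and $\mathrm{area}(K_i)$ denotes the surface area of this lower boundary. *)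

theory Defs
  imports "HOL-Analysis.Analysis"
begin

definition hausdorff_pre :: "nat \<Rightarrow> real \<Rightarrow> ('a::metric_space) set \<Rightarrow> ennreal" where
  "hausdorff_pre s \<delta> A =
     (INF U \<in> {U :: nat \<Rightarrow> 'a set. A \<subseteq> (\<Union>n. U n) \<and> (\<forall>n. diameter (U n) \<le> \<delta>)}.
        (\<Sum>n. (if U n = {} then 0 else ennreal (diameter (U n) ^ s))))"

definition hausdorff_measure :: "nat \<Rightarrow> ('a::metric_space) set \<Rightarrow> ennreal" where
  "hausdorff_measure s A = (SUP \<delta> \<in> {0<..}. hausdorff_pre s \<delta> A)"

definition area :: "(real ^ 'n) set \<Rightarrow> ennreal" where
  "area A = hausdorff_measure (CARD('n) - 1) A"

definition support_fun :: "(real ^ 'n) set \<Rightarrow> real ^ 'n \<Rightarrow> real" where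
  "support_fun K u = Sup ((\<lambda>y. y \<bullet> u) ` K)"

definition width :: "(real ^ 'n) set \<Rightarrow> real ^ 'n \<Rightarrow> real" where
  "width K u = support_fun K u + support_fun K (- u)"

definition convex_body :: "(real ^ 'n) set \<Rightarrow> bool" where
  "convex_body K \<longleftrightarrow> compact K \<and> convex K \<and> interior K \<noteq> {}"

text \<open>An index i in I^\<pm> is a pair (j, s) with j a coordinate and s \<in> {1,-1};
  e_i = s e_j.\<close>
definition Ipm :: "('n::finite \<times> real) set" where
  "Ipm = {(j, s). s = 1 \<or> s = -1}"

definition sdir :: "'n::finite \<Rightarrow> real \<Rightarrow> real ^ 'n" where
  "sdir j s = s *\<^sub>R axis j 1"

definition Vset :: "'n::finite \<Rightarrow> real \<Rightarrow> (real ^ 'n) set" where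
  "Vset j s = {u. norm u = 1 \<and>
     (\<forall>k t. (k, t) \<in> Ipm \<and> (k, t) \<noteq> (j, s) \<longrightarrow> u \<bullet> sdir k t \<le> u \<bullet> sdir j s)}"

definition Hplus :: "(real ^ 'n) set \<Rightarrow> real ^ 'n \<Rightarrow> (real ^ 'n) set" where
  "Hplus K u = {x. x \<bullet> u \<le> support_fun K u}"

definition Sreg :: "(real ^ 'n) set \<Rightarrow> 'n::finite \<Rightarrow> real \<Rightarrow> (real ^ 'n) set" where
  "Sreg K j s = (\<Inter>u \<in> Vset j s. Hplus K u)"

definition proj :: "'n::finite \<Rightarrow> real ^ 'n \<Rightarrow> real ^ 'n" where
  "proj j x = x - (x $ j) *\<^sub>R axis j 1"

definition thicken :: "'n::finite \<Rightarrow> (real ^ 'n) set \<Rightarrow> real \<Rightarrow> (real ^ 'n) set" where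
  "thicken j A \<alpha> = {p. p $ j = 0 \<and> infdist p A \<le> \<alpha>}"

definition Kalpha :: "(real ^ 'n) set \<Rightarrow> 'n::finite \<Rightarrow> real \<Rightarrow> real \<Rightarrow> (real ^ 'n) set" where
  "Kalpha K j s \<alpha> = {x \<in> Sreg K j s. proj j x \<in> thicken j (proj j ` K) \<alpha>}"

definition lower_boundary :: "'n::finite \<Rightarrow> (real ^ 'n) set \<Rightarrow> (real ^ 'n) set" where
  "lower_boundary j A = {x \<in> frontier A. \<exists>a. a \<noteq> 0 \<and> a $ j \<noteq> 0 \<and> (\<forall>y\<in>A. y \<bullet> a \<le> x \<bullet> a)}"

end

theory Submission
  imports Defs
begin


lemma diameter_unbounded_eq:
  fixes S T :: "'a::metric_space set"
  assumes "\<not> bounded S" "\<not> bounded T"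
  shows "diameter S = diameter T"
proof -
  have nb: "\<not> bdd_above ((\<lambda>(x,y). dist x y) ` (S \<times> S))" if "\<not> bounded S" for S :: "'a set"
  proof
    assume "bdd_above ((\<lambda>(x,y). dist x y) ` (S \<times> S))"
    then obtain M where M: "\<And>x y. x \<in> S \<Longrightarrow> y \<in> S \<Longrightarrow> dist x y \<le> M"
      unfolding bdd_above_def by fastforce
    have "S \<noteq> {}" using that by auto
    then obtain a where "a \<in> S" by auto
    then have "bounded S" unfolding bounded_def using M by blast
    with that show False by simp
  qed
  have eq: "Sup X = Sup Y" if "\<not> bdd_above X" "\<not> bdd_above Y" for X Y :: "real set"
  proof -
    have "(\<lambda>z. \<forall>x\<in>X. x \<le> z) = (\<lambda>z. False)" "(\<lambda>z. \<forall>x\<in>Y. x \<le> z) = (\<lambda>z. False)"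
      using that unfolding bdd_above_def by (auto simp: fun_eq_iff)
    then show ?thesis unfolding Sup_real_def by simp
  qed
  have "S \<noteq> {}" "T \<noteq> {}" using assms by auto
  then show ?thesis unfolding diameter_def using eq[OF nb[OF assms(1)] nb[OF assms(2)]] by simp
qed

definition hcost :: "nat \<Rightarrow> 'a::metric_space set \<Rightarrow> ennreal" where
  "hcost s U = (if U = {} then 0 else ennreal (diameter U ^ s))"

lemma hausdorff_pre_lip:
  fixes f :: "'a::{real_normed_vector,perfect_space} \<Rightarrow> 'a"
  assumes L: "L \<ge> 1" and d: "\<delta> > 0" and lip: "\<And>x y. dist (f x) (f y) \<le> L * dist x y"
  shows "hausdorff_pre s (L * \<delta>) (f ` A) \<le> ennreal (L ^ s) * hausdorff_pre s \<delta> A"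
proof -
  define c where "c = ennreal (L ^ s)"
  define c' where "c' = ennreal (1 / L ^ s)"
  have Lpos: "L > 0" using L by simp
  have cc': "c' * c = 1" unfolding c_def c'_def
    using Lpos by (simp add: ennreal_mult''[symmetric])
  have c1: "1 \<le> c" unfolding c_def using L by (simp add: one_le_power)
  let ?P = "hausdorff_pre s (L * \<delta>) (f ` A)"
  have key: "?P \<le> c * (\<Sum>n. hcost s (U n))"
    if U: "A \<subseteq> (\<Union>n. U n)" "\<And>n. diameter (U n) \<le> \<delta>" for U :: "nat \<Rightarrow> 'a set"
  proof -
    define V where "V n = (if bounded (U n) then f ` (U n \<inter> A) else UNIV)" for n
    have cov: "f ` A \<subseteq> (\<Union>n. V n)"
    proof
      fix y assume "y \<in> f ` A"
      then obtain x where x: "x \<in> A" "y = f x" by auto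
      then obtain n where "x \<in> U n" using U by auto
      then show "y \<in> (\<Union>n. V n)" using x unfolding V_def by (cases "bounded (U n)") auto
    qed
    have dV: "diameter (V n) \<le> L * \<delta> \<and> hcost s (V n) \<le> c * hcost s (U n)" for n
    proof (cases "bounded (U n)")
      case True
      show ?thesis
      proof (cases "U n \<inter> A = {}")
        case True
        with \<open>bounded (U n)\<close> show ?thesis unfolding V_def hcost_def using Lpos d by simp
      next
        case False
        have ne: "U n \<noteq> {}" using False by auto
        have dU0: "0 \<le> diameter (U n)" using True by (simp add: diameter_ge_0)
        have ptw: "dist x y \<le> L * diameter (U n)" if "x \<in> f ` (U n \<inter> A)" "y \<in> f ` (U n \<inter> A)" for x y
        proof -
          from that obtain a b where ab: "a \<in> U n" "b \<in> U n" "x = f a" "y = f b" by auto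
          have "dist a b \<le> diameter (U n)" using diameter_bounded_bound[OF True ab(1,2)] .
          then have "L * dist a b \<le> L * diameter (U n)" using Lpos by simp
          then show ?thesis using lip[of a b] ab by simp
        qed
        have dle: "diameter (V n) \<le> L * diameter (U n)"
          unfolding V_def using True
          by (simp, intro diameter_le) (use False ptw in \<open>auto simp: dist_norm\<close>)
        obtain a where a: "a \<in> f ` (U n \<inter> A)" using False by auto
        have bV: "bounded (V n)" unfolding V_def using True bounded_def ptw a by (simp) blast
        have dV0: "0 \<le> diameter (V n)" using bV by (simp add: diameter_ge_0)
        have "diameter (V n) ^ s \<le> (L * diameter (U n)) ^ s"
          using dle dV0 by (simp add: power_mono)
        then have "ennreal (diameter (V n) ^ s) \<le> c * ennreal (diameter (U n) ^ s)"
          unfolding c_def using Lpos dU0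
          by (simp add: ennreal_mult''[symmetric] power_mult_distrib)
        then have "hcost s (V n) \<le> c * hcost s (U n)"
          unfolding hcost_def using ne by auto
        moreover have "diameter (V n) \<le> L * \<delta>"
          using dle U(2)[of n] Lpos by (meson mult_left_mono order_trans less_imp_le)
        ultimately show ?thesis by simp
      qed
    next
      case False
      have VU: "V n = UNIV" unfolding V_def using False by simp
      have ne: "U n \<noteq> {}" using False by auto
      have eqd: "diameter (V n) = diameter (U n)"
        unfolding VU by (rule diameter_unbounded_eq) (use False in auto)
      have "\<delta> \<le> L * \<delta>" using L d by simp
      then have "diameter (V n) \<le> L * \<delta>" using eqd U(2)[of n] by simp
      moreover have "hcost s (V n) = hcost s (U n)" unfolding hcost_def eqd using ne VU by simp
      moreover have "hcost s (U n) \<le> c * hcost s (U n)"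
        using c1 mult_right_mono[OF c1, of "hcost s (U n)"] by simp
      ultimately show ?thesis by simp
    qed
    have "?P \<le> (\<Sum>n. hcost s (V n))"
      unfolding hausdorff_pre_def hcost_def
      by (rule INF_lower2[of V]) (use cov dV in auto)
    also have "\<dots> \<le> (\<Sum>n. c * hcost s (U n))"
      by (intro suminf_le) (use dV in auto)
    also have "\<dots> = c * (\<Sum>n. hcost s (U n))" by simp
    finally show ?thesis .
  qed
  have "c' * ?P \<le> hausdorff_pre s \<delta> A"
    unfolding hausdorff_pre_def[of s \<delta>]
  proof (rule INF_greatest)
    fix U :: "nat \<Rightarrow> 'a set" assume "U \<in> {U. A \<subseteq> (\<Union>n. U n) \<and> (\<forall>n. diameter (U n) \<le> \<delta>)}"
    then have "?P \<le> c * (\<Sum>n. hcost s (U n))" using key by auto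
    then have "c' * ?P \<le> c' * (c * (\<Sum>n. hcost s (U n)))" by (rule mult_left_mono) simp
    also have "\<dots> = (\<Sum>n. hcost s (U n))" using cc' by (simp add: mult.assoc[symmetric])
    finally show "c' * ?P \<le> (\<Sum>n. if U n = {} then 0 else ennreal (diameter (U n) ^ s))"
      unfolding hcost_def .
  qed
  then have "c * (c' * ?P) \<le> c * hausdorff_pre s \<delta> A" by (rule mult_left_mono) simp
  moreover have "c * (c' * ?P) = ?P" using cc' by (simp add: mult.assoc[symmetric] mult.commute)
  ultimately show ?thesis unfolding c_def by simp
qed

lemma hausdorff_lip:
  fixes f :: "'a::{real_normed_vector,perfect_space} \<Rightarrow> 'a"
  assumes L: "L \<ge> 1" and lip: "\<And>x y. dist (f x) (f y) \<le> L * dist x y"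
  shows "hausdorff_measure s (f ` A) \<le> ennreal (L ^ s) * hausdorff_measure s A"
  unfolding hausdorff_measure_def
proof (rule SUP_least)
  fix \<delta> :: real assume "\<delta> \<in> {0<..}"
  then have d: "\<delta> > 0" by simp
  have Lpos: "L > 0" using L by simp
  have "hausdorff_pre s \<delta> (f ` A) = hausdorff_pre s (L * (\<delta> / L)) (f ` A)" using Lpos by simp
  also have "\<dots> \<le> ennreal (L ^ s) * hausdorff_pre s (\<delta> / L) A"
    by (rule hausdorff_pre_lip[OF L _ lip]) (use d Lpos in simp)
  also have "\<dots> \<le> ennreal (L ^ s) * (SUP \<delta>\<in>{0<..}. hausdorff_pre s \<delta> A)"
    by (intro mult_left_mono SUP_upper) (use d Lpos in auto)
  finally show "hausdorff_pre s \<delta> (f ` A) \<le> ennreal (L ^ s) * (SUP \<delta>\<in>{0<..}. hausdorff_pre s \<delta> A)" .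
qed

lemma hausdorff_mono:
  assumes "A \<subseteq> B"
  shows "hausdorff_measure s A \<le> hausdorff_measure s B"
  unfolding hausdorff_measure_def hausdorff_pre_def
  by (intro SUP_mono' INF_superset_mono) (use assms in auto)



lemma s_cases: "(j, s) \<in> Ipm \<Longrightarrow> s = 1 \<or> s = -1"
  unfolding Ipm_def by auto

lemma inner_sdir: "u \<bullet> sdir k t = t * u $ k"
  unfolding sdir_def by (simp add: inner_axis)

lemma sdir_nth: "sdir k t $ i = (if i = k then t else 0)"
  unfolding sdir_def by (simp add: axis_def)

lemma proj_nth: "proj j x $ i = (if i = j then 0 else x $ i)"
  unfolding proj_def by (simp add: axis_def)

lemma proj_add_sdir: "proj j (x + t *\<^sub>R sdir j s) = proj j x"
  by (simp add: vec_eq_iff proj_nth sdir_nth)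

lemma proj_idem: "proj j (proj j x) = proj j x"
  by (simp add: vec_eq_iff proj_nth)

lemma proj_diff: "proj j x - proj j y = proj j (x - y)"
  by (simp add: vec_eq_iff proj_nth)

lemma norm_proj_le: "norm (proj j x) \<le> norm x"
  by (rule norm_le_componentwise_cart) (simp add: proj_nth)

lemma dist_proj_le: "dist (proj j x) (proj j y) \<le> dist x y"
  by (simp add: dist_norm proj_diff norm_proj_le)

lemma linear_proj: "linear (proj j)"
  by (rule linearI) (simp_all add: vec_eq_iff proj_nth)

lemma proj_decomp:
  assumes "s = 1 \<or> s = -1"
  shows "x = proj j x + (s * x $ j) *\<^sub>R sdir j s"
  using assms by (auto simp: vec_eq_iff proj_nth sdir_nth)

lemma vset_abs:
  assumes u: "u \<in> Vset j s" and s: "s = 1 \<or> s = -1"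
  shows "\<bar>u $ k\<bar> \<le> u \<bullet> sdir j s"
proof -
  have V: "\<And>k t. (k, t) \<in> Ipm \<Longrightarrow> (k, t) \<noteq> (j, s) \<Longrightarrow> t * u $ k \<le> s * u $ j"
    using u unfolding Vset_def by (auto simp: inner_sdir)
  show ?thesis
  proof (cases "k = j")
    case True
    have "(j, -s) \<in> Ipm" "(j, -s) \<noteq> (j, s)" using s unfolding Ipm_def by auto
    from V[OF this] show ?thesis using True s by (auto simp: inner_sdir)
  next
    case False
    have "(k, 1) \<in> Ipm" "(k, 1) \<noteq> (j, s)" "(k, -1) \<in> Ipm" "(k, -1) \<noteq> (j, s)"
      using False unfolding Ipm_def by auto
    from V[OF this(1,2)] V[OF this(3,4)] show ?thesis by (auto simp: inner_sdir)
  qed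
qed

lemma vset_sigma:
  fixes u :: "real ^ 'a"
  assumes u: "u \<in> Vset j s" and s: "s = 1 \<or> s = -1"
  shows "0 \<le> u \<bullet> sdir j s" "1 \<le> sqrt (real CARD('a)) * (u \<bullet> sdir j (s::real))"
    and "norm u = 1"
proof -
  let ?\<sigma> = "u \<bullet> sdir j s"
  show n1: "norm u = 1" using u unfolding Vset_def by auto
  show s0: "0 \<le> ?\<sigma>" using vset_abs[OF u s, of j] by simp
  have "1 = u \<bullet> u" using n1 by (simp add: dot_square_norm)
  also have "\<dots> = (\<Sum>i\<in>UNIV. u $ i * u $ i)" by (simp add: inner_vec_def)
  also have "\<dots> \<le> (\<Sum>i\<in>(UNIV::'a set). ?\<sigma> * ?\<sigma>)"
  proof (rule sum_mono)
    fix i :: 'a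
    have a: "\<bar>u $ i\<bar> \<le> ?\<sigma>" by (rule vset_abs[OF u s])
    then have "\<bar>u $ i\<bar> * \<bar>u $ i\<bar> \<le> ?\<sigma> * ?\<sigma>" by (rule mult_mono) (use a s0 in auto)
    then show "u $ i * u $ i \<le> ?\<sigma> * ?\<sigma>" by (simp add: abs_mult_self_eq)
  qed
  also have "\<dots> = (sqrt (real CARD('a)) * ?\<sigma>)\<^sup>2" by (simp add: power2_eq_square)
  finally have "1 \<le> (sqrt (real CARD('a)) * ?\<sigma>)\<^sup>2" .
  then show "1 \<le> sqrt (real CARD('a)) * ?\<sigma>"
    using s0 abs_le_square_iff[of 1 "sqrt (real CARD('a)) * ?\<sigma>"] by simp
qed

lemma sdir_in_vset:
  assumes s: "s = 1 \<or> s = -1"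
  shows "sdir j s \<in> Vset j s"
proof -
  have "norm (sdir j s) = 1" using s unfolding sdir_def by auto
  moreover have "sdir j s \<bullet> sdir k t \<le> sdir j s \<bullet> sdir j s" if "(k, t) \<in> Ipm" for k t
    using s that unfolding Ipm_def by (auto simp: inner_sdir sdir_nth)
  ultimately show ?thesis unfolding Vset_def by auto
qed

lemma Sreg_iff: "x \<in> Sreg K j s \<longleftrightarrow> (\<forall>u\<in>Vset j s. x \<bullet> u \<le> support_fun K u)"
  unfolding Sreg_def Hplus_def by auto

lemma closed_Sreg: "closed (Sreg K j s)"
  unfolding Sreg_def Hplus_def
  by (intro closed_INT ballI) (simp add: inner_commute closed_halfspace_le)

lemma support_ge:
  assumes "bounded K" "y \<in> K"
  shows "y \<bullet> u \<le> support_fun K u"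
proof -
  obtain B where B: "\<And>x. x \<in> K \<Longrightarrow> norm x \<le> B" using assms(1) bounded_iff by blast
  have "bdd_above ((\<lambda>y. y \<bullet> u) ` K)"
    by (rule bdd_aboveI[of _ "B * norm u"]) (use B in \<open>auto, meson Cauchy_Schwarz_ineq2 abs_le_D1 mult_right_mono norm_ge_zero order_trans\<close>)
  then show ?thesis unfolding support_fun_def using assms(2) by (auto intro: cSup_upper)
qed



definition topf :: "(real ^ 'n) set \<Rightarrow> 'n::finite \<Rightarrow> real \<Rightarrow> real ^ 'n \<Rightarrow> real" where
  "topf K j s p = Sup {t. p + t *\<^sub>R sdir j s \<in> Sreg K j s}"

lemma inner_Sreg_expand: "(p + t *\<^sub>R sdir j s) \<bullet> u = p \<bullet> u + t * (u \<bullet> sdir j s)"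
  by (simp add: inner_add_left inner_add_right inner_commute[of _ u])

lemma T_nonempty:
  fixes K :: "(real ^ 'n::finite) set"
  assumes K: "bounded K" "y0 \<in> K" and s: "s = 1 \<or> s = -1"
  shows "p + (- (norm p + norm y0) * sqrt (real CARD('n))) *\<^sub>R sdir j s \<in> Sreg K j s"
  unfolding Sreg_iff
proof
  fix u assume u: "u \<in> Vset j s"
  let ?\<sigma> = "u \<bullet> sdir j s" and ?q = "sqrt (real CARD('n))"
  have n1: "norm u = 1" and sg: "1 \<le> ?q * ?\<sigma>" using vset_sigma[OF u s] by auto
  have pu: "p \<bullet> u \<le> norm p" using Cauchy_Schwarz_ineq2[of p u] n1 by simp
  have yu: "- norm y0 \<le> y0 \<bullet> u" using Cauchy_Schwarz_ineq2[of y0 u] n1 by simp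
  have "(norm p + norm y0) * 1 \<le> (norm p + norm y0) * (?q * ?\<sigma>)"
    by (rule mult_left_mono[OF sg]) simp
  then have "- (norm p + norm y0) * ?q * ?\<sigma> \<le> - (norm p + norm y0)" by (simp add: algebra_simps)
  then have "(p + (- (norm p + norm y0) * ?q) *\<^sub>R sdir j s) \<bullet> u \<le> y0 \<bullet> u"
    unfolding inner_Sreg_expand using pu yu by (simp add: algebra_simps)
  also have "\<dots> \<le> support_fun K u" by (rule support_ge[OF K])
  finally show "(p + (- (norm p + norm y0) * ?q) *\<^sub>R sdir j s) \<bullet> u \<le> support_fun K u" .
qed

lemma T_bdd:
  assumes s: "s = 1 \<or> s = -1" and t: "p + t *\<^sub>R sdir j s \<in> Sreg K j s"
  shows "t \<le> support_fun K (sdir j s) - p \<bullet> sdir j s"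
proof -
  have "(p + t *\<^sub>R sdir j s) \<bullet> sdir j s \<le> support_fun K (sdir j s)"
    using t sdir_in_vset[OF s] unfolding Sreg_iff by blast
  moreover have "sdir j s \<bullet> sdir j s = 1" using s by (auto simp: inner_sdir sdir_nth)
  ultimately show ?thesis unfolding inner_Sreg_expand by simp
qed

lemma T_shift:
  fixes K :: "(real ^ 'n::finite) set"
  assumes s: "s = 1 \<or> s = -1" and t: "p + t *\<^sub>R sdir j s \<in> Sreg K j s"
  shows "q + (t - sqrt (real CARD('n)) * dist p q) *\<^sub>R sdir j s \<in> Sreg K j s"
  unfolding Sreg_iff
proof
  fix u assume u: "u \<in> Vset j s"
  let ?\<sigma> = "u \<bullet> sdir j s" and ?q = "sqrt (real CARD('n))"
  have n1: "norm u = 1" and sg: "1 \<le> ?q * ?\<sigma>" using vset_sigma[OF u s] by auto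
  have h: "p \<bullet> u + t * ?\<sigma> \<le> support_fun K u"
    using t u unfolding Sreg_iff inner_Sreg_expand by blast
  have "(q - p) \<bullet> u \<le> norm (q - p)" using Cauchy_Schwarz_ineq2[of "q - p" u] n1 by simp
  also have "\<dots> = dist p q * 1" by (simp add: dist_norm norm_minus_commute)
  also have "\<dots> \<le> dist p q * (?q * ?\<sigma>)" by (rule mult_left_mono[OF sg]) simp
  finally have "(q - p) \<bullet> u \<le> ?q * dist p q * ?\<sigma>" by (simp add: algebra_simps)
  then show "(q + (t - ?q * dist p q) *\<^sub>R sdir j s) \<bullet> u \<le> support_fun K u"
    using h unfolding inner_Sreg_expand by (simp add: algebra_simps inner_diff_left)
qed

lemma topf_lip:
  fixes K :: "(real ^ 'n::finite) set"
  assumes K: "bounded K" "K \<noteq> {}" and s: "s = 1 \<or> s = -1"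
  shows "\<bar>topf K j s p - topf K j s q\<bar> \<le> sqrt (real CARD('n)) * dist p q"
proof -
  obtain y0 where y0: "y0 \<in> K" using K by auto
  let ?T = "\<lambda>p. {t. p + t *\<^sub>R sdir j s \<in> Sreg K j s}"
  have ne: "?T p \<noteq> {}" for p using T_nonempty[OF K(1) y0 s, of p] by blast
  have bdd: "bdd_above (?T p)" for p
    by (rule bdd_aboveI[of _ "support_fun K (sdir j s) - p \<bullet> sdir j s"]) (use T_bdd[OF s] in auto)
  have one: "topf K j s p \<le> topf K j s q + sqrt (real CARD('n)) * dist p q" for p q
    unfolding topf_def
  proof (rule cSup_least[OF ne])
    fix t assume "t \<in> ?T p"
    then have "t - sqrt (real CARD('n)) * dist p q \<in> ?T q" using T_shift[OF s] by blast
    then have "t - sqrt (real CARD('n)) * dist p q \<le> Sup (?T q)" by (rule cSup_upper[OF _ bdd])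
    then show "t \<le> Sup (?T q) + sqrt (real CARD('n)) * dist p q" by simp
  qed
  show ?thesis using one[of p q] one[of q p] by (simp add: dist_commute abs_le_iff)
qed



lemma closed_Kalpha: "closed (Kalpha K j s \<alpha>)"
proof -
  have eq: "Kalpha K j s \<alpha> = Sreg K j s \<inter> {x. infdist (proj j x) (proj j ` K) \<le> \<alpha>}"
    unfolding Kalpha_def thicken_def by (auto simp: proj_nth)
  have "continuous_on UNIV (proj j)"
    using linear_proj linear_continuous_on linear_conv_bounded_linear by blast
  then have "closed {x. infdist (proj j x) (proj j ` K) \<le> \<alpha>}"
    by (intro closed_Collect_le continuous_on_infdist continuous_on_const) auto
  then show ?thesis unfolding eq by (intro closed_Int closed_Sreg)
qed

lemma lower_in:
  fixes K :: "(real ^ 'n::finite) set"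
  assumes s: "s = 1 \<or> s = -1" and x: "x \<in> lower_boundary j (Kalpha K j s \<alpha>)"
  shows "x = proj j x + topf K j s (proj j x) *\<^sub>R sdir j s \<and> proj j x \<in> thicken j (proj j ` K) \<alpha>"
proof -
  have xf: "x \<in> frontier (Kalpha K j s \<alpha>)" and
    "\<exists>a. a \<noteq> 0 \<and> a $ j \<noteq> 0 \<and> (\<forall>y\<in>Kalpha K j s \<alpha>. y \<bullet> a \<le> x \<bullet> a)"
    using x unfolding lower_boundary_def by auto
  then obtain a where a: "a $ j \<noteq> 0" "\<And>y. y \<in> Kalpha K j s \<alpha> \<Longrightarrow> y \<bullet> a \<le> x \<bullet> a" by blast
  have xK: "x \<in> Kalpha K j s \<alpha>" using xf frontier_subset_closed[OF closed_Kalpha] by blast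
  then have xS: "x \<in> Sreg K j s" and th: "proj j x \<in> thicken j (proj j ` K) \<alpha>"
    unfolding Kalpha_def by auto
  define p where "p = proj j x"
  define \<tau> where "\<tau> = s * x $ j"
  have xd: "x = p + \<tau> *\<^sub>R sdir j s" unfolding p_def \<tau>_def by (rule proj_decomp[OF s])
  have inKa: "p + t *\<^sub>R sdir j s \<in> Kalpha K j s \<alpha>" if "p + t *\<^sub>R sdir j s \<in> Sreg K j s" for t
    using that th unfolding Kalpha_def p_def by (simp add: proj_add_sdir proj_idem)
  have "p + (\<tau> - 1) *\<^sub>R sdir j s \<in> Sreg K j s"
    unfolding Sreg_iff
  proof
    fix u assume u: "u \<in> Vset j s"
    have "p \<bullet> u + \<tau> * (u \<bullet> sdir j s) \<le> support_fun K u"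
      using xS u unfolding xd Sreg_iff inner_Sreg_expand by blast
    moreover have "0 \<le> u \<bullet> sdir j s" using vset_sigma[OF u s] by simp
    ultimately show "(p + (\<tau> - 1) *\<^sub>R sdir j s) \<bullet> u \<le> support_fun K u"
      unfolding inner_Sreg_expand by (simp add: algebra_simps)
  qed
  from a(2)[OF inKa[OF this]] have "(p + (\<tau> - 1) *\<^sub>R sdir j s) \<bullet> a \<le> (p + \<tau> *\<^sub>R sdir j s) \<bullet> a"
    using xd by simp
  then have "0 \<le> a \<bullet> sdir j s" unfolding inner_Sreg_expand by (simp add: algebra_simps)
  moreover have "a \<bullet> sdir j s \<noteq> 0" using a(1) s by (auto simp: inner_sdir)
  ultimately have apos: "0 < a \<bullet> sdir j s" by simp
  have mx: "t \<le> \<tau>" if "t \<in> {t. p + t *\<^sub>R sdir j s \<in> Sreg K j s}" for t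
  proof (rule ccontr)
    assume "\<not> t \<le> \<tau>"
    then have "\<tau> * (a \<bullet> sdir j s) < t * (a \<bullet> sdir j s)" using apos by simp
    moreover have "(p + t *\<^sub>R sdir j s) \<bullet> a \<le> (p + \<tau> *\<^sub>R sdir j s) \<bullet> a"
      using a(2)[OF inKa] that xd by simp
    ultimately show False unfolding inner_Sreg_expand by simp
  qed
  have "\<tau> \<in> {t. p + t *\<^sub>R sdir j s \<in> Sreg K j s}" using xS xd by simp
  then have "topf K j s p = \<tau>" unfolding topf_def by (rule cSup_eq_maximum) (use mx in auto)
  then show ?thesis using xd th unfolding p_def by simp
qed



lemma sum_option: "(\<Sum>k\<in>(UNIV :: 'a::finite option set). f k) = f None + (\<Sum>i\<in>UNIV. f (Some i))"
proof -
  have "(\<Sum>k\<in>(UNIV :: 'a option set). f k) = (\<Sum>k\<in>insert None (range Some). f k)"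
    by (simp add: UNIV_option_conv)
  also have "\<dots> = f None + (\<Sum>k\<in>range Some. f k)" by (subst sum.insert) auto
  also have "(\<Sum>k\<in>range Some. f k) = (\<Sum>i\<in>UNIV. f (Some i))"
    by (subst sum.reindex) (auto simp: inj_on_def)
  finally show ?thesis .
qed

definition Amat :: "real ^ 'n ^ ('n::finite option) \<Rightarrow> real ^ ('n option) ^ ('n option)" where
  "Amat W = (\<chi> i k. case i of None \<Rightarrow> 1 | Some r \<Rightarrow> (W $ k) $ r)"

lemma Amat_nth: "Amat W $ i $ k = (case i of None \<Rightarrow> 1 | Some r \<Rightarrow> (W $ k) $ r)"
  unfolding Amat_def by simp

lemma Amat_mult_None: "(Amat W *v l) $ None = (\<Sum>k\<in>UNIV. l $ k)"
  by (simp add: matrix_vector_mult_def Amat_nth)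

lemma Amat_mult_Some: "(Amat W *v l) $ Some r = (\<Sum>k\<in>UNIV. l $ k *\<^sub>R W $ k) $ r"
  by (simp add: matrix_vector_mult_def Amat_nth mult.commute)

lemma continuous_det_Amat: "continuous_on UNIV (\<lambda>W. det (Amat W))"
proof -
  have c: "continuous_on UNIV (\<lambda>W. Amat W $ i $ k)" for i k
    by (cases i) (auto simp: Amat_nth intro!: continuous_intros)
  show ?thesis unfolding det_def by (intro continuous_intros c)
qed

lemma compact_Ws:
  fixes K :: "(real ^ 'n::finite) set"
  assumes "compact K"
  shows "compact {W :: real ^ 'n ^ ('n option). \<forall>k. W $ k \<in> K}"
proof -
  have cl: "closed K" and bd: "bounded K" using assms compact_eq_bounded_closed by auto
  have "{W :: real ^ 'n ^ ('n option). \<forall>k. W $ k \<in> K} = (\<Inter>k. (\<lambda>W. W $ k) -` K)" by auto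
  then have "closed {W :: real ^ 'n ^ ('n option). \<forall>k. W $ k \<in> K}"
    using closed_vimage_vec_nth[OF cl] by (auto intro!: closed_INT)
  moreover
  obtain B where B: "\<And>x. x \<in> K \<Longrightarrow> norm x \<le> B" using bd bounded_iff by blast
  have "bounded {W :: real ^ 'n ^ ('n option). \<forall>k. W $ k \<in> K}"
    unfolding bounded_iff
  proof (intro exI ballI)
    fix W :: "real ^ 'n ^ ('n option)" assume "W \<in> {W. \<forall>k. W $ k \<in> K}"
    then have nb: "\<And>k. norm (W $ k) \<le> B" using B by auto
    have "norm W \<le> (\<Sum>k\<in>UNIV. norm (W $ k))"
      unfolding norm_vec_def by (rule L2_set_le_sum) simp
    also have "\<dots> \<le> (\<Sum>k\<in>(UNIV :: 'n option set). B)" by (rule sum_mono) (rule nb)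
    finally show "norm W \<le> (\<Sum>k\<in>(UNIV :: 'n option set). B)" .
  qed
  ultimately show ?thesis using compact_eq_bounded_closed by blast
qed



lemma det_nonzero_exists:
  fixes K :: "(real ^ 'n::finite) set"
  assumes sub: "cball x \<rho> \<subseteq> K" and rho: "\<rho> > 0"
  shows "\<exists>W :: real ^ 'n ^ ('n option). (\<forall>k. W $ k \<in> K) \<and> det (Amat W) \<noteq> 0"
proof -
  define W0 :: "real ^ 'n ^ ('n option)" where
    "W0 = (\<chi> k. case k of None \<Rightarrow> x | Some i \<Rightarrow> x + \<rho> *\<^sub>R axis i 1)"
  have inK: "\<forall>k. W0 $ k \<in> K"
  proof
    fix k show "W0 $ k \<in> K"
    proof (cases k)
      case None then show ?thesis using sub rho unfolding W0_def by auto
    next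
      case (Some i)
      have "dist x (x + \<rho> *\<^sub>R axis i 1) = \<rho>" using rho by (simp add: dist_norm)
      then show ?thesis using sub Some unfolding W0_def by auto
    qed
  qed
  have ker: "l = 0" if l: "Amat W0 *v l = 0" for l
  proof -
    have s0: "(\<Sum>k\<in>UNIV. l $ k) = 0" using Amat_mult_None[of W0 l] l by simp
    have comp: "(\<Sum>k\<in>UNIV. l $ k *\<^sub>R W0 $ k) $ r = (\<Sum>k\<in>UNIV. l $ k) * x $ r + \<rho> * l $ Some r" for r
    proof -
      have "(\<Sum>k\<in>UNIV. l $ k *\<^sub>R W0 $ k) $ r = (\<Sum>k\<in>UNIV. l $ k * W0 $ k $ r)" by simp
      also have "\<dots> = l $ None * x $ r + (\<Sum>i\<in>UNIV. l $ Some i * (x $ r + \<rho> * (if r = i then 1 else 0)))"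
        by (simp add: sum_option W0_def axis_def)
      also have "(\<Sum>i\<in>UNIV. l $ Some i * (x $ r + \<rho> * (if r = i then 1 else 0))) =
          (\<Sum>i\<in>UNIV. l $ Some i) * x $ r + \<rho> * l $ Some r"
      proof -
        have "(\<Sum>i\<in>UNIV. l $ Some i * (x $ r + \<rho> * (if r = i then 1 else 0))) =
          (\<Sum>i\<in>UNIV. l $ Some i * x $ r + (if r = i then \<rho> * l $ Some i else 0))"
          by (rule sum.cong) (auto simp: algebra_simps)
        also have "\<dots> = (\<Sum>i\<in>UNIV. l $ Some i * x $ r) + (\<Sum>i\<in>UNIV. if r = i then \<rho> * l $ Some i else 0)"
          by (rule sum.distrib)
        also have "\<dots> = (\<Sum>i\<in>UNIV. l $ Some i) * x $ r + \<rho> * l $ Some r"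
          by (simp add: sum_distrib_right)
        finally show ?thesis .
      qed
      finally show ?thesis by (simp add: sum_option algebra_simps)
    qed
    have sr: "l $ Some r = 0" for r
      using comp[of r] s0 Amat_mult_Some[of W0 l r] l rho by simp
    then have "l $ None = 0" using s0 by (simp add: sum_option)
    with sr show ?thesis by (simp add: vec_eq_iff split: option.split) (metis option.exhaust)
  qed
  have "invertible (Amat W0)"
    unfolding invertible_left_inverse matrix_left_invertible_ker using ker by blast
  then show ?thesis using inK invertible_det_nz by blast
qed



lemma inradius:
  fixes K :: "(real ^ 'n::finite) set"
  assumes cb: "convex_body K" and e: "\<epsilon> > 0"
    and w: "\<forall>u. norm u = 1 \<longrightarrow> \<epsilon> \<le> width K u"
  shows "\<exists>g. \<forall>z. dist z g \<le> \<epsilon> / (real CARD('n) + 1) \<longrightarrow> z \<in> K"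
proof -
  have cK: "compact K" and cvx: "convex K" and int: "interior K \<noteq> {}"
    using cb unfolding convex_body_def by auto
  have bK: "bounded K" and clK: "closed K" using cK compact_eq_bounded_closed by auto
  obtain x where "x \<in> interior K" using int by auto
  then obtain \<rho> where rho: "\<rho> > 0" "cball x \<rho> \<subseteq> K" using mem_interior_cball by blast
  have Kne: "K \<noteq> {}" using rho by auto
  define Ws where "Ws = {W :: real ^ 'n ^ ('n option). \<forall>k. W $ k \<in> K}"
  obtain W1 where W1: "W1 \<in> Ws" "det (Amat W1) \<noteq> 0"
    using det_nonzero_exists[OF rho(2) rho(1)] unfolding Ws_def by blast
  have "continuous_on Ws (\<lambda>W. \<bar>det (Amat W)\<bar>)"
    by (intro continuous_on_rabs continuous_on_subset[OF continuous_det_Amat]) auto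
  then obtain Wm where Wm: "Wm \<in> Ws" "\<And>W. W \<in> Ws \<Longrightarrow> \<bar>det (Amat W)\<bar> \<le> \<bar>det (Amat Wm)\<bar>"
    using continuous_attains_sup[of Ws "\<lambda>W. \<bar>det (Amat W)\<bar>"] compact_Ws[OF cK] W1(1)
    unfolding Ws_def by blast
  have dm: "det (Amat Wm) \<noteq> 0" using Wm(2)[OF W1(1)] W1(2) by auto
  then obtain B where MB: "Amat Wm ** B = mat 1"
    using invertible_det_nz invertible_right_inverse by blast
  have WmK: "Wm $ k \<in> K" for k using Wm(1) unfolding Ws_def by auto
  define d where "d = real CARD('n)"
  have d1: "d \<ge> 1" unfolding d_def by simp
  have bary: "\<exists>l. (\<forall>k. \<bar>l $ k\<bar> \<le> 1) \<and> (\<Sum>k\<in>UNIV. l $ k) = 1 \<and> (\<Sum>k\<in>UNIV. l $ k *\<^sub>R Wm $ k) = p"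
    if p: "p \<in> K" for p
  proof -
    define b :: "real ^ ('n option)" where "b = (\<chi> i. case i of None \<Rightarrow> 1 | Some r \<Rightarrow> p $ r)"
    define l where "l = B *v b"
    have Ml: "Amat Wm *v l = b" unfolding l_def matrix_vector_mul_assoc MB by simp
    have s1: "(\<Sum>k\<in>UNIV. l $ k) = 1" using Amat_mult_None[of Wm l] Ml unfolding b_def by simp
    have sv: "(\<Sum>k\<in>UNIV. l $ k *\<^sub>R Wm $ k) = p"
    proof -
      have "\<forall>r. (\<Sum>k\<in>UNIV. l $ k *\<^sub>R Wm $ k) $ r = p $ r"
      proof
      fix r show "(\<Sum>k\<in>UNIV. l $ k *\<^sub>R Wm $ k) $ r = p $ r"
        using Amat_mult_Some[of Wm l r] Ml unfolding b_def by simp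
      qed
      then show ?thesis by (simp add: vec_eq_iff)
    qed
    have lk: "\<bar>l $ k\<bar> \<le> 1" for k
    proof -
      define W' where "W' = (\<chi> m. if m = k then p else Wm $ m)"
      have W'in: "W' \<in> Ws" unfolding Ws_def W'_def using p WmK by auto
      have "Amat W' = (\<chi> i m. if m = k then (Amat Wm *v l) $ i else Amat Wm $ i $ m)"
        unfolding Ml vec_eq_iff
      proof (intro allI)
        fix i m show "Amat W' $ i $ m = (\<chi> i m. if m = k then b $ i else Amat Wm $ i $ m) $ i $ m"
          by (cases i) (simp_all add: Amat_nth W'_def b_def)
      qed
      then have "det (Amat W') = l $ k * det (Amat Wm)" by (simp only: cramer_lemma)
      then have "\<bar>l $ k\<bar> * \<bar>det (Amat Wm)\<bar> \<le> 1 * \<bar>det (Amat Wm)\<bar>"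
        using Wm(2)[OF W'in] by (simp add: abs_mult)
      then show ?thesis using dm by (simp add: mult_le_cancel_right)
    qed
    show ?thesis using lk s1 sv by blast
  qed
  define g where "g = (\<Sum>k\<in>UNIV. (1 / (d + 1)) *\<^sub>R Wm $ k)"
  have card1: "(\<Sum>k\<in>(UNIV :: 'n option set). (1::real)) = d + 1"
    by (simp add: sum_option d_def)
  have gsum: "(d + 1) *\<^sub>R g = (\<Sum>k\<in>UNIV. Wm $ k)"
    unfolding g_def scaleR_sum_right using d1 by simp
  have key: "\<exists>q\<in>K. d *\<^sub>R q = (d + 1) *\<^sub>R g - p" if p: "p \<in> K" for p
  proof -
    obtain l where l: "\<And>k. \<bar>l $ k\<bar> \<le> 1" "(\<Sum>k\<in>UNIV. l $ k) = 1" "(\<Sum>k\<in>UNIV. l $ k *\<^sub>R Wm $ k) = p"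
      using bary[OF p] by blast
    define q where "q = (\<Sum>k\<in>UNIV. ((1 - l $ k) / d) *\<^sub>R Wm $ k)"
    have "(\<Sum>k\<in>UNIV. (1 - l $ k) / d) = ((\<Sum>k\<in>(UNIV :: 'n option set). (1::real)) - (\<Sum>k\<in>UNIV. l $ k)) / d"
      by (simp add: sum_divide_distrib[symmetric] sum_subtractf)
    also have "\<dots> = 1" using card1 l(2) d1 by simp
    finally have cs: "(\<Sum>k\<in>UNIV. (1 - l $ k) / d) = 1" .
    have qK: "q \<in> K" unfolding q_def
      by (rule convex_sum[OF _ cvx]) (use cs WmK l(1) d1 abs_le_iff in \<open>auto simp: abs_le_iff\<close>)
    have "d *\<^sub>R q = (\<Sum>k\<in>UNIV. (1 - l $ k) *\<^sub>R Wm $ k)"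
      unfolding q_def scaleR_sum_right using d1 by simp
    also have "\<dots> = (\<Sum>k\<in>UNIV. Wm $ k) - (\<Sum>k\<in>UNIV. l $ k *\<^sub>R Wm $ k)"
      by (simp add: scaleR_diff_left sum_subtractf)
    also have "\<dots> = (d + 1) *\<^sub>R g - p" using gsum l(3) by simp
    finally show ?thesis using qK by blast
  qed
  have hu: "g \<bullet> u + \<epsilon> / (d + 1) \<le> support_fun K u" if u: "norm u = 1" for u
  proof -
    have "support_fun K (- u) \<le> d * support_fun K u - (d + 1) * (g \<bullet> u)"
      unfolding support_fun_def[of K "- u"]
    proof (rule cSup_least)
      show "(\<lambda>y. y \<bullet> - u) ` K \<noteq> {}" using Kne by simp
    next
      fix v assume "v \<in> (\<lambda>y. y \<bullet> - u) ` K"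
      then obtain y where y: "y \<in> K" "v = y \<bullet> - u" by auto
      obtain q where q: "q \<in> K" "d *\<^sub>R q = (d + 1) *\<^sub>R g - y" using key[OF y(1)] by blast
      have "(d *\<^sub>R q) \<bullet> u = ((d + 1) *\<^sub>R g - y) \<bullet> u" using q(2) by simp
      then have "v = d * (q \<bullet> u) - (d + 1) * (g \<bullet> u)" using y(2) by (simp add: inner_diff_left)
      moreover have "d * (q \<bullet> u) \<le> d * support_fun K u"
        using support_ge[OF bK q(1)] d1 by simp
      ultimately show "v \<le> d * support_fun K u - (d + 1) * (g \<bullet> u)" by simp
    qed
    moreover have "\<epsilon> \<le> support_fun K u + support_fun K (- u)" using w u unfolding width_def by auto
    ultimately have "\<epsilon> \<le> (d + 1) * (support_fun K u - g \<bullet> u)" by (simp add: algebra_simps)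
    then have "\<epsilon> / (d + 1) \<le> support_fun K u - g \<bullet> u" using d1 by (simp add: field_simps)
    then show ?thesis by simp
  qed
  have "z \<in> K" if z: "dist z g \<le> \<epsilon> / (d + 1)" for z
  proof (rule ccontr)
    assume "z \<notin> K"
    then obtain a b where ab: "a \<bullet> z < b" "\<And>x. x \<in> K \<Longrightarrow> a \<bullet> x > b"
      using separating_hyperplane_closed_point[OF cvx clK] by blast
    have a0: "a \<noteq> 0" using ab Kne by fastforce
    define u where "u = - (1 / norm a) *\<^sub>R a"
    have nu: "norm u = 1" unfolding u_def using a0 by simp
    have "support_fun K u \<le> - b / norm a"
      unfolding support_fun_def
    proof (rule cSup_least)
      show "(\<lambda>y. y \<bullet> u) ` K \<noteq> {}" using Kne by simp
    next
      fix v assume "v \<in> (\<lambda>y. y \<bullet> u) ` K"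
      then obtain y where y: "y \<in> K" "v = y \<bullet> u" by auto
      have "v = - (a \<bullet> y) / norm a" unfolding y(2) u_def by (simp add: inner_commute)
      then show "v \<le> - b / norm a" using ab(2)[OF y(1)] a0 by (simp add: divide_right_mono)
    qed
    moreover have "z \<bullet> u = - (a \<bullet> z) / norm a" unfolding u_def by (simp add: inner_commute)
    then have "- b / norm a < z \<bullet> u" using ab(1) a0 by (simp add: divide_strict_right_mono)
    moreover have "z \<bullet> u = g \<bullet> u + (z - g) \<bullet> u" by (simp add: inner_diff_left)
    moreover have "(z - g) \<bullet> u \<le> norm (z - g)" using Cauchy_Schwarz_ineq2[of "z - g" u] nu by simp
    moreover have "norm (z - g) \<le> \<epsilon> / (d + 1)" using z by (simp add: dist_norm)
    ultimately show False using hu[OF nu] by linarith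
  qed
  then show ?thesis unfolding d_def by blast
qed



lemma proj_add_axis: "proj j (x + t *\<^sub>R axis j 1) = proj j x"
  by (simp add: vec_eq_iff proj_nth axis_def)

lemma proj_frontier:
  fixes K :: "(real ^ 'n::finite) set"
  assumes bK: "bounded K" and y: "y \<in> K"
  shows "proj j y \<in> proj j ` frontier K"
proof -
  obtain B where B: "\<And>x. x \<in> K \<Longrightarrow> norm x \<le> B" using bK bounded_iff by blast
  define R where "R = B + norm y + 1"
  define z where "z = y + R *\<^sub>R axis j 1"
  have "norm y \<le> B" using B y by simp
  then have Rpos: "R > 0" unfolding R_def using norm_ge_zero[of y] by linarith
  have "norm (R *\<^sub>R axis j (1::real)) \<le> norm z + norm y"
    unfolding z_def by (metis add_diff_cancel_left' norm_triangle_ineq4)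
  then have "R \<le> norm z + norm y" using Rpos by simp
  then have "z \<notin> K" using B[of z] unfolding R_def by auto
  then have "closed_segment y z - K \<noteq> {}" by auto
  moreover have "closed_segment y z \<inter> K \<noteq> {}" using y by auto
  ultimately obtain w where w: "w \<in> closed_segment y z" "w \<in> frontier K"
    using connected_Int_frontier[OF connected_segment] by blast
  then obtain c where "w = (1 - c) *\<^sub>R y + c *\<^sub>R z" unfolding closed_segment_def by auto
  then have "w = y + (c * R) *\<^sub>R axis j 1" unfolding z_def by (simp add: algebra_simps)
  then have "proj j w = proj j y" by (simp add: proj_add_axis)
  then show ?thesis using w(2) by (metis image_eqI)
qed

lemma homothety_cover:
  fixes P :: "(real ^ 'n::finite) set"
  assumes cvx: "convex P" and clP: "closed P" and Pne: "P \<noteq> {}"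
    and Pj: "\<And>p. p \<in> P \<Longrightarrow> p $ j = 0"
    and ball: "\<And>w. w $ j = 0 \<Longrightarrow> dist w x0 \<le> r \<Longrightarrow> w \<in> P"
    and r: "r > 0" and x0: "x0 $ j = 0" and a: "\<alpha> > 0"
  shows "thicken j P \<alpha> \<subseteq> (\<lambda>p. x0 + (1 + \<alpha> / r) *\<^sub>R (p - x0)) ` P"
proof
  fix z assume "z \<in> thicken j P \<alpha>"
  then have zj: "z $ j = 0" and zd: "infdist z P \<le> \<alpha>" unfolding thicken_def by auto
  obtain p where p: "p \<in> P" "infdist z P = dist z p" using infdist_attains_inf[OF clP Pne] by blast
  define l where "l = 1 + \<alpha> / r"
  have l1: "l > 1" unfolding l_def using a r by simp
  define w where "w = x0 + (r / \<alpha>) *\<^sub>R (z - p)"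
  have "w $ j = 0" unfolding w_def using zj x0 Pj[OF p(1)] by simp
  moreover have "dist w x0 \<le> r"
  proof -
    have "dist w x0 = (r / \<alpha>) * norm (z - p)" unfolding w_def using r a by (simp add: dist_norm)
    also have "\<dots> \<le> (r / \<alpha>) * \<alpha>"
      using zd p(2) r a by (intro mult_left_mono) (simp_all add: dist_norm)
    also have "\<dots> = r" using a by simp
    finally show ?thesis .
  qed
  ultimately have wP: "w \<in> P" by (rule ball)
  define q where "q = (1 / l) *\<^sub>R p + (1 - 1 / l) *\<^sub>R w"
  have qP: "q \<in> P" unfolding q_def
    using cvx p(1) wP l1 unfolding convex_def by (auto simp: field_simps)
  have "l *\<^sub>R q = p + (l - 1) *\<^sub>R w" unfolding q_def using l1 by (simp add: algebra_simps)
  also have "(l - 1) *\<^sub>R w = (\<alpha> / r) *\<^sub>R x0 + (z - p)"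
    unfolding w_def l_def using r a by (simp add: algebra_simps)
  finally have "l *\<^sub>R q = p + (\<alpha> / r) *\<^sub>R x0 + (z - p)" by simp
  then have "x0 + l *\<^sub>R (q - x0) = z" unfolding l_def by (simp add: algebra_simps)
  then show "z \<in> (\<lambda>p. x0 + (1 + \<alpha> / r) *\<^sub>R (p - x0)) ` P" using qP unfolding l_def by blast
qed



theorem lemma1:
  shows "\<exists>C::real. C \<ge> 0 \<and>
    (\<forall>(K :: (real ^ 'n) set) (\<epsilon>::real) (j::'n) (s::real).
       convex_body K \<and> \<epsilon> > 0 \<and> (\<forall>u. norm u = 1 \<longrightarrow> width K u \<ge> \<epsilon>) \<and> (j, s) \<in> Ipm
       \<longrightarrow> area (lower_boundary j (Kalpha K j s (2 * \<epsilon>))) \<le> ennreal C * area (frontier K))"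
proof -
  define d where "d = real CARD('n)"
  define M where "M = (1 + sqrt d) * (2 * d + 3)"
  have d1: "d \<ge> 1" unfolding d_def by simp
  have ma: "1 \<le> 1 + sqrt d" using d1 by simp
  have mb: "1 \<le> 2 * d + 3" using d1 by simp
  have M1: "M \<ge> 1" unfolding M_def using mult_mono[OF ma mb] d1 by (simp add: add_nonneg_nonneg)
  show ?thesis
  proof (intro exI[of _ "M ^ (CARD('n) - 1)"] conjI allI impI)
    show "0 \<le> M ^ (CARD('n) - 1)" using M1 by simp
  next
    fix K :: "(real ^ 'n) set" and \<epsilon> :: real and j :: 'n and s :: real
    assume asm: "convex_body K \<and> \<epsilon> > 0 \<and> (\<forall>u. norm u = 1 \<longrightarrow> width K u \<ge> \<epsilon>) \<and> (j, s) \<in> Ipm"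
    then have cb: "convex_body K" and e: "\<epsilon> > 0" and w: "\<forall>u. norm u = 1 \<longrightarrow> \<epsilon> \<le> width K u"
      and s: "s = 1 \<or> s = -1" using s_cases by auto
    have cK: "compact K" and cvx: "convex K" and int: "interior K \<noteq> {}"
      using cb unfolding convex_body_def by auto
    have bK: "bounded K" using cK compact_eq_bounded_closed by auto
    have Kne: "K \<noteq> {}" using int interior_subset by blast
    obtain g where g: "\<And>z. dist z g \<le> \<epsilon> / (d + 1) \<Longrightarrow> z \<in> K"
      using inradius[OF cb e w] unfolding d_def by blast
    define r where "r = \<epsilon> / (d + 1)"
    have r: "r > 0" unfolding r_def using e d1 by simp
    define x0 where "x0 = proj j g"
    define P where "P = proj j ` K"
    have linp: "linear (proj j)" by (rule linear_proj)
    have cvxP: "convex P" unfolding P_def by (rule convex_linear_image[OF linp cvx])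
    have cP: "compact P" unfolding P_def
      by (rule compact_continuous_image[OF _ cK])
         (use linp linear_continuous_on linear_conv_bounded_linear in blast)
    have clP: "closed P" using cP compact_eq_bounded_closed by auto
    have Pne: "P \<noteq> {}" using Kne unfolding P_def by simp
    have Pj: "p $ j = 0" if "p \<in> P" for p using that unfolding P_def by (auto simp: proj_nth)
    have ball: "w \<in> P" if "w $ j = 0" "dist w x0 \<le> r" for w
    proof -
      define z where "z = w + (g $ j) *\<^sub>R axis j 1"
      have "z - g = w - x0" unfolding z_def x0_def using that(1)
        by (simp add: vec_eq_iff proj_nth axis_def)
      then have "dist z g \<le> r" using that(2) by (simp add: dist_norm)
      then have "z \<in> K" using g unfolding r_def by blast
      moreover have "proj j z = w" unfolding z_def using that(1)
        by (simp add: vec_eq_iff proj_nth axis_def)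
      ultimately show ?thesis unfolding P_def by blast
    qed
    have x0j: "x0 $ j = 0" unfolding x0_def by (simp add: proj_nth)
    define lam where "lam = 1 + 2 * \<epsilon> / r"
    have lam: "lam = 2 * d + 3" unfolding lam_def r_def using e d1 by (simp add: field_simps)
    define hom where "hom = (\<lambda>p. x0 + lam *\<^sub>R (p - x0))"
    have thick: "thicken j P (2 * \<epsilon>) \<subseteq> hom ` P"
      unfolding hom_def lam_def using homothety_cover[OF cvxP clP Pne Pj ball r x0j, of "2 * \<epsilon>"] e
      by simp
    have Pfr: "P \<subseteq> proj j ` frontier K" unfolding P_def using proj_frontier[OF bK] by blast
    define \<Gamma> where "\<Gamma> = (\<lambda>y. proj j y + topf K j s (proj j y) *\<^sub>R sdir j s)"
    define G where "G = \<Gamma> \<circ> hom \<circ> proj j"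
    have sub: "lower_boundary j (Kalpha K j s (2 * \<epsilon>)) \<subseteq> G ` frontier K"
    proof
      fix x assume "x \<in> lower_boundary j (Kalpha K j s (2 * \<epsilon>))"
      from lower_in[OF s this] have x: "x = \<Gamma> (proj j x)" and th: "proj j x \<in> thicken j P (2 * \<epsilon>)"
        unfolding \<Gamma>_def P_def by (simp_all add: proj_idem)
      from th thick obtain q where q: "q \<in> P" "proj j x = hom q" by blast
      from q(1) Pfr obtain v where v: "v \<in> frontier K" "q = proj j v" by blast
      have "x = G v" unfolding G_def using x q(2) v(2) by simp
      then show "x \<in> G ` frontier K" using v(1) by blast
    qed
    have nsd: "norm (sdir j s) = 1" using s unfolding sdir_def by auto
    have lipG: "dist (\<Gamma> a) (\<Gamma> b) \<le> (1 + sqrt d) * dist a b" for a b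
    proof -
      have "\<Gamma> a - \<Gamma> b = proj j (a - b) + (topf K j s (proj j a) - topf K j s (proj j b)) *\<^sub>R sdir j s"
        unfolding \<Gamma>_def proj_diff[symmetric] by (simp add: algebra_simps)
      then have "dist (\<Gamma> a) (\<Gamma> b) \<le> norm (proj j (a - b)) + \<bar>topf K j s (proj j a) - topf K j s (proj j b)\<bar>"
        using norm_triangle_ineq[of "proj j (a - b)" "(topf K j s (proj j a) - topf K j s (proj j b)) *\<^sub>R sdir j s"] nsd
        by (simp add: dist_norm)
      also have "\<dots> \<le> dist a b + sqrt d * dist (proj j a) (proj j b)"
        using norm_proj_le[of j "a - b"] topf_lip[OF bK Kne s, of j "proj j a" "proj j b"]
        unfolding d_def by (simp add: dist_norm)
      also have "\<dots> \<le> dist a b + sqrt d * dist a b"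
        using mult_left_mono[OF dist_proj_le[of j a b], of "sqrt d"] d1 by simp
      finally show ?thesis by (simp add: algebra_simps)
    qed
    have liph: "dist (hom a) (hom b) = lam * dist a b" for a b
    proof -
      have "hom a - hom b = lam *\<^sub>R (a - b)" unfolding hom_def by (simp add: algebra_simps)
      then show ?thesis using lam d1 by (simp add: dist_norm)
    qed
    have lip: "dist (G a) (G b) \<le> M * dist a b" for a b
    proof -
      have "dist (G a) (G b) \<le> (1 + sqrt d) * dist (hom (proj j a)) (hom (proj j b))"
        unfolding G_def using lipG by simp
      also have "\<dots> = (1 + sqrt d) * lam * dist (proj j a) (proj j b)" by (simp add: liph)
      also have "\<dots> \<le> (1 + sqrt d) * lam * dist a b"
        using dist_proj_le[of j a b] lam d1 by (intro mult_left_mono) simp_all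
      finally show ?thesis unfolding M_def lam by simp
    qed
    have "area (lower_boundary j (Kalpha K j s (2 * \<epsilon>))) \<le> area (G ` frontier K)"
      unfolding area_def by (rule hausdorff_mono[OF sub])
    also have "\<dots> \<le> ennreal (M ^ (CARD('n) - 1)) * area (frontier K)"
      unfolding area_def by (rule hausdorff_lip[OF M1 lip])
    finally show "area (lower_boundary j (Kalpha K j s (2 * \<epsilon>))) \<le> ennreal (M ^ (CARD('n) - 1)) * area (frontier K)" .
  qed
qed


end
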